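(* For every state $\rho\in\mathsf{St}(S)$, $$\max_{\mathcal E\in\mathsf{EPC}}\ \min_{\tau\in\mathsf P(S)}\frac{\langle\phi_+|\mathcal E(\rho)|\phi_+\rangle}{\langle\phi_+|\mathcal E(\tau)|\phi_+\rangle}=d\,\max_{\mathcal E\in\mathsf{EPC}}\langle\phi_+|\mathcal E(\rho)|\phi_+\rangle=2^{R^{\rm coh}_{\max}(\rho)}.$$
   Context: $S$ is a $d$-dimensional quantum system with non-degenerate Hamiltonian $H=\sum_i E_i|i\rangle\langle i|$, $E_1<\dots<E_d$. $\mathsf{St}(S)$ is the set of density matrices; $\mathsf P(S)$ is the set of passive states, i.e. states $\sum_ip_i|i\rangle\langle i|$ with $p_1\ge\dots\ge p_d$. $|\phi_+\rangle=\frac1{\sqrt d}\sum_{i=1}^d|i\rangle$. $\mathsf{EPC}$ is the set of energy-preserving channels: CPTP maps $\mathcal E$ with $\langle i|\mathcal E(\rho)|i\rangle=\langle i|\rho|i\rangle$ for all $\rho$ and $i$. $D_{\max}(A\|B)=\min\{s\ge0:A\le2^sB\}$, and the max relative entropy of coherence is $R^{\rm coh}_{\max}(\rho)=\min\{D_{\max}(\rho\|\gamma):\gamma\in\mathsf{St}(S),\ [\gamma,H]=0\}$ (log base 2). *)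

theory Defs
  imports "HOL-Analysis.Analysis"
begin

text \<open>Operators on the d-dimensional system S are complex d x d matrices indexed by a finite
  type 'n (d = CARD('n)); the energy eigenbasis is the standard basis, and the Hamiltonian is
  H = diag(En) with En injective (non-degenerate spectrum).\<close>

type_synonym 'n op = "complex^'n^'n"

definition mscale :: "complex \<Rightarrow> 'n::finite op \<Rightarrow> 'n op" where
  "mscale c A = (\<chi> i j. c * A$i$j)"

definition hermitian :: "'n::finite op \<Rightarrow> bool" where
  "hermitian A \<longleftrightarrow> (\<forall>i j. A$i$j = cnj (A$j$i))"

definition psd :: "'n::finite op \<Rightarrow> bool" where
  "psd A \<longleftrightarrow> hermitian A \<and>
     (\<forall>x::complex^'n. 0 \<le> Re (\<Sum>i\<in>UNIV. \<Sum>j\<in>UNIV. cnj (x$i) * A$i$j * x$j))"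

definition trace :: "'n::finite op \<Rightarrow> complex" where
  "trace A = (\<Sum>i\<in>UNIV. A$i$i)"

definition density :: "'n::finite op \<Rightarrow> bool" where
  "density A \<longleftrightarrow> psd A \<and> trace A = 1"

definition hamiltonian :: "('n::finite \<Rightarrow> real) \<Rightarrow> 'n op" where
  "hamiltonian En = (\<chi> i j. if i = j then complex_of_real (En i) else 0)"

definition passive_state :: "('n::finite \<Rightarrow> real) \<Rightarrow> 'n op \<Rightarrow> bool" where
  "passive_state En A \<longleftrightarrow> density A \<and> (\<forall>i j. i \<noteq> j \<longrightarrow> A$i$j = 0) \<and>
     (\<forall>i j. En i < En j \<longrightarrow> Re (A$j$j) \<le> Re (A$i$i))"

definition clinear_map :: "('n::finite op \<Rightarrow> 'n op) \<Rightarrow> bool" where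
  "clinear_map E \<longleftrightarrow> (\<forall>A B. E (A + B) = E A + E B) \<and> (\<forall>c A. E (mscale c A) = mscale c (E A))"

text \<open>Positive semidefiniteness of an operator on C^k (x) C^d, given as a function on
  index pairs (a,i) with a < k.\<close>
definition ext_psd :: "nat \<Rightarrow> (nat \<times> 'n::finite \<Rightarrow> nat \<times> 'n \<Rightarrow> complex) \<Rightarrow> bool" where
  "ext_psd k M \<longleftrightarrow>
     (\<forall>p\<in>{..<k} \<times> (UNIV::'n set). \<forall>q\<in>{..<k} \<times> (UNIV::'n set). M p q = cnj (M q p)) \<and>
     (\<forall>x :: nat \<times> 'n \<Rightarrow> complex.
        0 \<le> Re (\<Sum>p\<in>{..<k} \<times> (UNIV::'n set). \<Sum>q\<in>{..<k} \<times> (UNIV::'n set). cnj (x p) * M p q * x q))"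

text \<open>(id_k \<otimes> E) applied blockwise.\<close>
definition ext_map :: "('n::finite op \<Rightarrow> 'n op) \<Rightarrow> (nat \<times> 'n \<Rightarrow> nat \<times> 'n \<Rightarrow> complex)
    \<Rightarrow> (nat \<times> 'n \<Rightarrow> nat \<times> 'n \<Rightarrow> complex)" where
  "ext_map E M = (\<lambda>p q. E (\<chi> i j. M (fst p, i) (fst q, j)) $ snd p $ snd q)"

definition completely_positive :: "('n::finite op \<Rightarrow> 'n op) \<Rightarrow> bool" where
  "completely_positive E \<longleftrightarrow> (\<forall>k M. ext_psd k M \<longrightarrow> ext_psd k (ext_map E M))"

definition trace_preserving :: "('n::finite op \<Rightarrow> 'n op) \<Rightarrow> bool" where
  "trace_preserving E \<longleftrightarrow> (\<forall>A. trace (E A) = trace A)"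

definition CPTP :: "('n::finite op \<Rightarrow> 'n op) \<Rightarrow> bool" where
  "CPTP E \<longleftrightarrow> clinear_map E \<and> completely_positive E \<and> trace_preserving E"

definition EPC :: "('n::finite op \<Rightarrow> 'n op) set" where
  "EPC = {E. CPTP E \<and> (\<forall>\<rho> i. density \<rho> \<longrightarrow> E \<rho> $ i $ i = \<rho> $ i $ i)}"

text \<open>\<langle>phi_+|A|phi_+\<rangle> with phi_+ = d^(-1/2) \<Sum>_i |i\<rangle>.\<close>
definition phi_plus_exp :: "'n::finite op \<Rightarrow> complex" where
  "phi_plus_exp A = (\<Sum>i\<in>UNIV. \<Sum>j\<in>UNIV. A$i$j) / of_nat CARD('n)"

text \<open>Max relative entropy (value \<infinity> when no s works), and max relative entropy of coherence.\<close>
definition Dmax :: "'n::finite op \<Rightarrow> 'n op \<Rightarrow> ereal" where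
  "Dmax A B = Inf {ereal s | s. 0 \<le> s \<and> psd (mscale (complex_of_real (2 powr s)) B - A)}"

definition Rcoh_max :: "('n::finite \<Rightarrow> real) \<Rightarrow> 'n op \<Rightarrow> ereal" where
  "Rcoh_max En \<rho> = Inf {Dmax \<rho> \<gamma> | \<gamma>. density \<gamma> \<and> \<gamma> ** hamiltonian En = hamiltonian En ** \<gamma>}"

definition is_max :: "real set \<Rightarrow> real \<Rightarrow> bool" where
  "is_max A v \<longleftrightarrow> v \<in> A \<and> (\<forall>a\<in>A. a \<le> v)"

definition is_min :: "real set \<Rightarrow> real \<Rightarrow> bool" where
  "is_min A v \<longleftrightarrow> v \<in> A \<and> (\<forall>a\<in>A. v \<le> a)"

end

theory Submission imports Defs begin

definition qf :: "'n::finite op \<Rightarrow> complex^'n \<Rightarrow> complex" where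
  "qf A x = (\<Sum>i\<in>UNIV. \<Sum>j\<in>UNIV. cnj (x$i) * A$i$j * x$j)"

lemma psd_qf: "psd A \<longleftrightarrow> hermitian A \<and> (\<forall>x. 0 \<le> Re (qf A x))"
  unfolding psd_def qf_def by simp

lemma sum_two:
  fixes f :: "'n::finite \<Rightarrow> 'b::comm_monoid_add"
  assumes "i \<noteq> j" "\<And>k. k \<noteq> i \<Longrightarrow> k \<noteq> j \<Longrightarrow> f k = 0"
  shows "sum f UNIV = f i + f j"
proof -
  have "sum f UNIV = sum f {i,j}"
    by (rule sum.mono_neutral_right) (auto intro: assms(2))
  also have "\<dots> = f i + f j" using assms(1) by simp
  finally show ?thesis .
qed

lemma sum_one:
  fixes f :: "'n::finite \<Rightarrow> 'b::comm_monoid_add"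
  assumes "\<And>k. k \<noteq> i \<Longrightarrow> f k = 0"
  shows "sum f UNIV = f i"
proof -
  have "sum f UNIV = sum f {i}"
    by (rule sum.mono_neutral_right) (auto intro: assms)
  then show ?thesis by simp
qed

lemma qf_two:
  assumes "i \<noteq> j"
  shows "qf A (\<chi> k. if k = i then u else if k = j then v else 0)
    = cnj u * A$i$i * u + cnj u * A$i$j * v + cnj v * A$j$i * u + cnj v * A$j$j * v"
proof -
  let ?x = "(\<chi> k. if k = i then u else if k = j then v else 0) :: complex^'a"
  have in1: "(\<Sum>l\<in>UNIV. cnj (?x$k) * A$k$l * ?x$l) = cnj (?x$k) * A$k$i * u + cnj (?x$k) * A$k$j * v" for k
    using sum_two[OF assms, where f="\<lambda>l. cnj (?x$k) * A$k$l * ?x$l"] assms by auto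
  have "qf A ?x = (\<Sum>k\<in>UNIV. cnj (?x$k) * A$k$i * u + cnj (?x$k) * A$k$j * v)"
    unfolding qf_def by (simp only: in1)
  also have "\<dots> = (cnj u * A$i$i * u + cnj u * A$i$j * v) + (cnj v * A$j$i * u + cnj v * A$j$j * v)"
    by (subst sum_two[OF assms]) (simp_all add: assms not_sym[OF assms])
  finally show ?thesis by (simp add: algebra_simps)
qed

lemma qf_one:
  shows "qf A (\<chi> k. if k = i then 1 else 0) = A$i$i"
proof -
  let ?x = "(\<chi> k. if k = i then 1 else 0) :: complex^'a"
  have in1: "(\<Sum>l\<in>UNIV. cnj (?x$k) * A$k$l * ?x$l) = cnj (?x$k) * A$k$i" for k
    using sum_one[where i=i and f="\<lambda>l. cnj (?x$k) * A$k$l * ?x$l"] by auto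
  have "qf A ?x = (\<Sum>k\<in>UNIV. cnj (?x$k) * A$k$i)"
    unfolding qf_def by (simp only: in1)
  also have "\<dots> = A$i$i" using sum_one[where i=i and f="\<lambda>k. cnj (?x$k) * A$k$i"] by auto
  finally show ?thesis .
qed

lemma psd_diag_nonneg: assumes "psd A" shows "0 \<le> Re (A$i$i)"
proof -
  have "0 \<le> Re (qf A (\<chi> k. if k = i then 1 else 0))" using assms psd_qf by blast
  thus ?thesis by (simp only: qf_one)
qed

lemma hermitian_diag_real: assumes "hermitian A" shows "A$i$i = complex_of_real (Re (A$i$i))"
proof -
  have "A$i$i = cnj (A$i$i)" using assms unfolding hermitian_def by blast
  thus ?thesis by (simp add: complex_eq_iff)
qed

lemma psd_zero_diag:
  assumes "psd A" "A$j$j = 0" "i \<noteq> j"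
  shows "A$i$j = 0"
proof (rule ccontr)
  assume nz: "A$i$j \<noteq> 0"
  define a where "a = A$i$j"
  have "hermitian A" using assms(1) psd_def by blast
  hence herm: "A$j$i = cnj a" unfolding hermitian_def a_def by blast
  define c where "c = cmod a ^ 2"
  have cpos: "c > 0" using nz by (simp add: c_def a_def)
  have ac: "a * cnj a = of_real c" unfolding c_def by (rule complex_norm_square[symmetric])
  define t where "t = (\<bar>Re (A$i$i)\<bar> + 1) / (2 * c)"
  define v where "v = - (of_real t * cnj a)"
  have q: "qf A (\<chi> k. if k = i then 1 else if k = j then v else 0) = A$i$i + a * v + cnj v * cnj a"
    using qf_two[OF assms(3), of A 1 v] assms(2) herm by (simp add: a_def)
  have e1: "a * v = - of_real (t * c)"
    unfolding v_def using ac by (simp add: algebra_simps)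
  have e2: "cnj v * cnj a = - of_real (t * c)"
    using arg_cong[OF e1, of cnj] by (simp add: mult.commute)
  have "0 \<le> Re (qf A (\<chi> k. if k = i then 1 else if k = j then v else 0))"
    using assms(1) psd_qf by blast
  hence "0 \<le> Re (A$i$i + a * v + cnj v * cnj a)" by (simp only: q)
  hence "0 \<le> Re (A$i$i + - of_real (t * c) + - of_real (t * c))" by (simp only: e1 e2)
  hence "0 \<le> Re (A$i$i) - 2 * (t * c)" by (simp add: mult.commute)
  moreover have "2 * (t * c) = \<bar>Re (A$i$i)\<bar> + 1" using cpos by (simp add: t_def)
  ultimately show False by linarith
qed

definition diagm :: "('n::finite \<Rightarrow> complex) \<Rightarrow> 'n op" where
  "diagm c = (\<chi> i j. if i = j then c i else 0)"

definition sumall :: "'n::finite op \<Rightarrow> complex" where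
  "sumall A = (\<Sum>i\<in>UNIV. \<Sum>j\<in>UNIV. A$i$j)"

lemma op_eqI: "(\<And>i j. (A::'n::finite op)$i$j = B$i$j) \<Longrightarrow> A = B"
  by (simp add: vec_eq_iff)

lemma diagm_nth[simp]: "diagm c $ i $ j = (if i = j then c i else 0)"
  by (simp add: diagm_def)

lemma qf_add: "qf (A + B) x = qf A x + qf B x"
  unfolding qf_def by (simp add: distrib_left distrib_right sum.distrib)

lemma qf_diff: "qf (A - B) x = qf A x - qf B x"
  unfolding qf_def by (simp add: left_diff_distrib right_diff_distrib sum_subtractf)

lemma scaleR_nth2: "(c *\<^sub>R A)$i$j = of_real c * (A$i$j :: complex)"
  by (simp only: vector_scaleR_component) (simp add: scaleR_conv_of_real)

lemma qf_scaleR: "qf (c *\<^sub>R A) x = of_real c * qf A x"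
  unfolding qf_def scaleR_nth2 by (simp add: sum_distrib_left algebra_simps)

lemma qf_diagm: "qf (diagm c) x = (\<Sum>i\<in>UNIV. cnj (x$i) * c i * x$i)"
proof -
  have "(\<Sum>j\<in>UNIV. cnj (x$i) * diagm c $ i $ j * x$j) = cnj (x$i) * c i * x$i" for i
    by (rule trans[OF sum_one[where i=i]]) auto
  thus ?thesis unfolding qf_def by simp
qed

lemma sumall_qf: "sumall A = qf A (\<chi> i. 1)"
  unfolding qf_def sumall_def by simp

lemma sumall_diff: "sumall (A - B) = sumall A - sumall B"
  unfolding sumall_def by (simp add: sum_subtractf)

lemma sumall_diagm: "sumall (diagm c) = sum c UNIV"
proof -
  have "(\<Sum>j\<in>UNIV. diagm c $ i $ j) = c i" for i
    by (rule trans[OF sum_one[where i=i]]) auto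
  thus ?thesis unfolding sumall_def by simp
qed

lemma trace_diagm: "trace (diagm c) = sum c UNIV"
  unfolding trace_def by simp

lemma psd_diagm:
  assumes "\<And>i. c i = complex_of_real (Re (c i))" "\<And>i. 0 \<le> Re (c i)"
  shows "psd (diagm c)"
  unfolding psd_qf
proof (intro conjI allI)
  have "diagm c $ i $ j = cnj (diagm c $ j $ i)" for i j
  proof (cases "i = j")
    case True
    have "cnj (c i) = c i" using assms(1)[of i] by (metis complex_cnj_complex_of_real)
    thus ?thesis using True by simp
  qed simp
  thus "hermitian (diagm c)" unfolding hermitian_def by blast
  fix x :: "complex^'a"
  have eq: "Re (cnj (x$i) * c i * x$i) = Re (c i) * (cmod (x$i))^2" for i
  proof -
    have "cnj (x$i) * c i * x$i = c i * (x$i * cnj (x$i))"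
      by (simp only: mult.commute mult.left_commute)
    also have "\<dots> = complex_of_real (Re (c i)) * complex_of_real ((cmod (x$i))^2)"
      by (subst assms(1)) (simp only: complex_norm_square)
    finally show ?thesis by simp
  qed
  have "Re (qf (diagm c) x) = (\<Sum>i\<in>UNIV. Re (c i) * (cmod (x$i))^2)"
    unfolding qf_diagm Re_sum eq ..
  moreover have "0 \<le> (\<Sum>i\<in>UNIV. Re (c i) * (cmod (x$i))^2)"
    by (intro sum_nonneg mult_nonneg_nonneg assms(2)) simp
  ultimately show "0 \<le> Re (qf (diagm c) x)" by simp
qed

lemma clinear_zero: assumes "clinear_map E" shows "E 0 = 0"
proof -
  have "E (0 + 0) = E 0 + E 0" using assms unfolding clinear_map_def by blast
  thus ?thesis by simp
qed

lemma clinear_diff: assumes "clinear_map E" shows "E (A - B) = E A - E B"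
proof -
  have "E ((A - B) + B) = E (A - B) + E B" using assms unfolding clinear_map_def by blast
  thus ?thesis by simp
qed

lemma clinear_sum: assumes "clinear_map E" "finite S" shows "E (sum f S) = (\<Sum>x\<in>S. E (f x))"
  using assms(2)
proof (induction S rule: finite_induct)
  case empty then show ?case using clinear_zero[OF assms(1)] by simp
next
  case (insert x F)
  have "E (f x + sum f F) = E (f x) + E (sum f F)" using assms(1) unfolding clinear_map_def by blast
  then show ?case using insert by simp
qed

lemma clinear_mscale: "clinear_map E \<Longrightarrow> E (mscale c A) = mscale c (E A)"
  unfolding clinear_map_def by blast

definition unitm :: "'n::finite \<Rightarrow> 'n op" where
  "unitm k = diagm (\<lambda>i. if i = k then 1 else 0)"

lemma diagm_decomp: "diagm c = (\<Sum>k\<in>UNIV. mscale (c k) (unitm k))"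
proof -
  have "(\<Sum>k\<in>UNIV. mscale (c k) (unitm k)) $ i $ j = diagm c $ i $ j" for i j
  proof -
    have "(\<Sum>k\<in>UNIV. mscale (c k) (unitm k)) $ i $ j = (\<Sum>k\<in>UNIV. c k * unitm k $ i $ j)"
      by (simp add: sum_component mscale_def)
    also have "\<dots> = diagm c $ i $ j"
      by (rule trans[OF sum_one[where i=i]]) (simp_all add: unitm_def)
    finally show ?thesis .
  qed
  thus ?thesis by (intro op_eqI) (rule sym)
qed

lemma density_unitm: "density (unitm k)"
  unfolding density_def unitm_def
proof
  show "psd (diagm (\<lambda>i. if i = k then 1 else 0))" by (rule psd_diagm) simp_all
  show "trace (diagm (\<lambda>i. if i = k then 1 else 0)) = 1" unfolding trace_diagm by simp
qed

lemma sum_prod1: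
  fixes g :: "nat \<times> 'n::finite \<Rightarrow> 'b::comm_monoid_add"
  shows "sum g ({..<1::nat} \<times> (UNIV::'n set)) = (\<Sum>i\<in>UNIV. g (0, i))"
proof -
  have "{..<1::nat} \<times> (UNIV::'n set) = (\<lambda>i. (0, i)) ` UNIV" by auto
  moreover have "inj (\<lambda>i::'n. (0::nat, i))" by (auto simp: inj_def)
  ultimately show ?thesis by (simp add: sum.reindex)
qed

lemma cp_pos:
  assumes cp: "completely_positive E" and A: "psd A"
  shows "psd (E A)"
proof -
  define M where "M = (\<lambda>(p::nat \<times> 'a) (q::nat \<times> 'a). A $ snd p $ snd q :: complex)"
  have hA: "hermitian A" using A psd_qf by blast
  have "ext_psd 1 M" unfolding ext_psd_def
  proof (intro conjI ballI allI)
    fix p q show "M p q = cnj (M q p)" using hA unfolding M_def hermitian_def by blast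
  next
    fix x :: "nat \<times> 'a \<Rightarrow> complex"
    have "(\<Sum>p\<in>{..<1} \<times> UNIV. \<Sum>q\<in>{..<1} \<times> UNIV. cnj (x p) * M p q * x q)
          = qf A (\<chi> i. x (0, i))"
      unfolding sum_prod1 qf_def M_def by simp
    thus "0 \<le> Re (\<Sum>p\<in>{..<1} \<times> UNIV. \<Sum>q\<in>{..<1} \<times> UNIV. cnj (x p) * M p q * x q)"
      using A psd_qf by metis
  qed
  hence ext: "ext_psd 1 (ext_map E M)" using cp unfolding completely_positive_def by blast
  have em: "ext_map E M p q = E A $ snd p $ snd q" for p q
  proof -
    have "(\<chi> i j. M (fst p, i) (fst q, j)) = A" unfolding M_def by (simp add: vec_eq_iff)
    thus ?thesis unfolding ext_map_def by simp
  qed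
  show ?thesis unfolding psd_qf
  proof (intro conjI allI)
    have "E A $ i $ j = cnj (E A $ j $ i)" for i j
    proof -
      have "(0::nat, i) \<in> {..<1} \<times> UNIV" "(0::nat, j) \<in> {..<1} \<times> UNIV" by auto
      hence "ext_map E M (0, i) (0, j) = cnj (ext_map E M (0, j) (0, i))"
        using ext unfolding ext_psd_def by blast
      thus ?thesis unfolding em by simp
    qed
    thus "hermitian (E A)" unfolding hermitian_def by blast
  next
    fix y :: "complex^'a"
    define x where "x = (\<lambda>p::nat \<times> 'a. y $ snd p)"
    have "0 \<le> Re (\<Sum>p\<in>{..<1} \<times> UNIV. \<Sum>q\<in>{..<1} \<times> UNIV. cnj (x p) * ext_map E M p q * x q)"
      using ext unfolding ext_psd_def by blast
    also have "(\<Sum>p\<in>{..<1} \<times> UNIV. \<Sum>q\<in>{..<1} \<times> UNIV. cnj (x p) * ext_map E M p q * x q) = qf (E A) y"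
      unfolding sum_prod1 qf_def em x_def by simp
    finally show "0 \<le> Re (qf (E A) y)" .
  qed
qed

lemma EPC_unitm:
  assumes "E \<in> EPC" shows "E (unitm k) = unitm k"
proof -
  have cptp: "CPTP E" and dg: "\<And>\<rho> i. density \<rho> \<Longrightarrow> E \<rho> $ i $ i = \<rho> $ i $ i"
    using assms unfolding EPC_def by auto
  have ps: "psd (E (unitm k))"
    using cp_pos[of E "unitm k"] cptp density_unitm[of k] unfolding CPTP_def density_def by blast
  have d: "E (unitm k) $ i $ i = unitm k $ i $ i" for i using dg density_unitm by blast
  have h: "hermitian (E (unitm k))" using ps psd_qf by blast
  show ?thesis
  proof (rule op_eqI)
    fix i j
    show "E (unitm k) $ i $ j = unitm k $ i $ j"
    proof (cases "i = j")
      case True thus ?thesis using d by simp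
    next
      case False
      show ?thesis
      proof (cases "j = k")
        case True
        hence "i \<noteq> k" using False by simp
        hence "E (unitm k) $ i $ i = 0" using d by (simp add: unitm_def)
        hence "E (unitm k) $ j $ i = 0" using psd_zero_diag[OF ps, of i j] False by simp
        hence "E (unitm k) $ i $ j = 0" using h unfolding hermitian_def by (metis complex_cnj_zero)
        thus ?thesis using False by (simp add: unitm_def)
      next
        case False2: False
        hence "E (unitm k) $ j $ j = 0" using d by (simp add: unitm_def)
        hence "E (unitm k) $ i $ j = 0" using psd_zero_diag[OF ps, of j i] False by simp
        thus ?thesis using False by (simp add: unitm_def)
      qed
    qed
  qed
qed

lemma EPC_diagm:
  assumes "E \<in> EPC" shows "E (diagm c) = diagm c"
proof -
  have lin: "clinear_map E" using assms unfolding EPC_def CPTP_def by blast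
  have "E (diagm c) = (\<Sum>k\<in>UNIV. E (mscale (c k) (unitm k)))"
    unfolding diagm_decomp by (rule clinear_sum[OF lin]) simp
  also have "\<dots> = (\<Sum>k\<in>UNIV. mscale (c k) (unitm k))"
    by (rule sum.cong[OF refl]) (simp add: clinear_mscale[OF lin] EPC_unitm[OF assms])
  finally show ?thesis unfolding diagm_decomp .
qed

lemma EPC_lin: "E \<in> EPC \<Longrightarrow> clinear_map E"
  unfolding EPC_def CPTP_def by blast

lemma EPC_cp: "E \<in> EPC \<Longrightarrow> completely_positive E"
  unfolding EPC_def CPTP_def by blast

definition rdiag :: "('n::finite \<Rightarrow> real) \<Rightarrow> 'n op" where
  "rdiag l = diagm (\<lambda>i. complex_of_real (l i))"

lemma weak_dual:
  assumes E: "E \<in> EPC" and P: "psd (rdiag l - \<rho>)"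
  shows "Re (sumall (E \<rho>)) \<le> sum l UNIV"
proof -
  have "E (rdiag l - \<rho>) = rdiag l - E \<rho>"
    unfolding clinear_diff[OF EPC_lin[OF E]] rdiag_def EPC_diagm[OF E] ..
  hence ps: "psd (rdiag l - E \<rho>)" using cp_pos[OF EPC_cp[OF E] P] by simp
  have "0 \<le> Re (qf (rdiag l - E \<rho>) (\<chi> i. 1))" using ps psd_qf by blast
  also have "qf (rdiag l - E \<rho>) (\<chi> i. 1) = sumall (rdiag l) - sumall (E \<rho>)"
    unfolding sumall_qf[symmetric] sumall_diff ..
  also have "sumall (rdiag l) = of_real (sum l UNIV)"
    unfolding rdiag_def sumall_diagm by simp
  finally show ?thesis by simp
qed

lemma prod_le_N:
  fixes a b N :: real
  assumes "0 \<le> a" "0 \<le> b" "a^2 \<le> N" "b^2 \<le> N"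
  shows "a * b \<le> N"
proof -
  have "0 \<le> (a - b)^2" by simp
  moreover have "(a-b)^2 = a*a - 2*(a*b) + b*b" by (simp add: power2_eq_square algebra_simps)
  moreover have "a^2 = a*a" "b^2 = b*b" by (simp_all add: power2_eq_square)
  ultimately show ?thesis using assms by linarith
qed

lemma diag_dominant:
  assumes hA: "hermitian A"
  shows "psd (rdiag (\<lambda>_. \<Sum>i\<in>UNIV. \<Sum>j\<in>UNIV. cmod (A$i$j)) + A)"
  unfolding psd_qf
proof (intro conjI allI)
  define C where "C = (\<Sum>i\<in>UNIV. \<Sum>j\<in>UNIV. cmod (A$i$j))"
  have hA': "A$i$j = cnj (A$j$i)" for i j using hA unfolding hermitian_def by blast
  have rd: "cnj (rdiag (\<lambda>_. C) $ j $ i) = rdiag (\<lambda>_. C) $ i $ j" for i j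
    unfolding rdiag_def by simp
  have "(rdiag (\<lambda>_. C) + A) $ i $ j = cnj ((rdiag (\<lambda>_. C) + A) $ j $ i)" for i j
    by (simp only: vector_add_component complex_cnj_add rd hA'[of i j])
  thus "hermitian (rdiag (\<lambda>_. \<Sum>i\<in>UNIV. \<Sum>j\<in>UNIV. cmod (A$i$j)) + A)"
    unfolding hermitian_def C_def by blast
  fix x :: "complex^'a"
  define N where "N = (\<Sum>k\<in>UNIV. (cmod (x$k))^2)"
  have xk: "(cmod (x$k))^2 \<le> N" for k
    unfolding N_def by (rule member_le_sum) auto
  have eq: "Re (cnj (x$i) * complex_of_real C * x$i) = C * (cmod (x$i))^2" for i
  proof -
    have "cnj (x$i) * complex_of_real C * x$i = complex_of_real C * (x$i * cnj (x$i))"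
      by (simp only: mult.commute mult.left_commute)
    also have "\<dots> = complex_of_real C * complex_of_real ((cmod (x$i))^2)"
      by (simp only: complex_norm_square)
    also have "\<dots> = complex_of_real (C * (cmod (x$i))^2)" by (simp only: of_real_mult)
    finally show ?thesis by (simp only: Re_complex_of_real)
  qed
  have q1: "Re (qf (rdiag (\<lambda>_. C)) x) = C * N"
    unfolding rdiag_def qf_diagm Re_sum eq N_def by (simp add: sum_distrib_left)
  have trm: "- (cmod (A$i$j) * N) \<le> Re (cnj (x$i) * A$i$j * x$j)" for i j
  proof -
    have "cmod (x$i) * cmod (x$j) \<le> N" by (rule prod_le_N) (simp_all add: xk)
    hence "cmod (A$i$j) * (cmod (x$i) * cmod (x$j)) \<le> cmod (A$i$j) * N"
      by (rule mult_left_mono) simp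
    moreover have "cmod (cnj (x$i) * A$i$j * x$j) = cmod (A$i$j) * (cmod (x$i) * cmod (x$j))"
      by (simp add: norm_mult)
    moreover have "- cmod (cnj (x$i) * A$i$j * x$j) \<le> Re (cnj (x$i) * A$i$j * x$j)"
      using abs_Re_le_cmod[of "cnj (x$i) * A$i$j * x$j"] by linarith
    ultimately show ?thesis by linarith
  qed
  have "- (C * N) = (\<Sum>i\<in>UNIV. \<Sum>j\<in>UNIV. - (cmod (A$i$j) * N))"
    unfolding C_def by (simp add: sum_distrib_right sum_negf)
  also have "\<dots> \<le> (\<Sum>i\<in>UNIV. \<Sum>j\<in>UNIV. Re (cnj (x$i) * A$i$j * x$j))"
    by (intro sum_mono trm)
  also have "\<dots> = Re (qf A x)" unfolding qf_def by simp
  finally have q2: "- (C * N) \<le> Re (qf A x)" .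
  show "0 \<le> Re (qf (rdiag (\<lambda>_. \<Sum>i\<in>UNIV. \<Sum>j\<in>UNIV. cmod (A$i$j)) + A) x)"
    unfolding C_def[symmetric] qf_add using q1 q2 by simp
qed

lemma passive_diag: "passive_state En \<tau> \<Longrightarrow> \<tau> = diagm (\<lambda>i. \<tau>$i$i)"
  unfolding passive_state_def by (intro op_eqI) auto

lemma phi_sumall: "phi_plus_exp A = sumall A / of_nat CARD('n)"
  for A :: "'n::finite op"
  unfolding phi_plus_exp_def sumall_def ..

lemma Re_phi: "real CARD('n) * Re (phi_plus_exp A) = Re (sumall A)"
  for A :: "'n::finite op"
proof -
  have "CARD('n) > 0" by simp
  thus ?thesis unfolding phi_sumall by (simp add: Re_divide_of_nat)
qed

lemma phi_passive:
  fixes \<tau> :: "'n::finite op"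
  assumes E: "E \<in> EPC" and t: "passive_state En \<tau>"
  shows "Re (phi_plus_exp (E \<tau>)) = 1 / real CARD('n)"
proof -
  have "E \<tau> = \<tau>" using passive_diag[OF t] EPC_diagm[OF E] by metis
  moreover have "sumall \<tau> = 1"
    using passive_diag[OF t] t unfolding passive_state_def density_def
    by (metis sumall_diagm trace_diagm)
  ultimately show ?thesis unfolding phi_sumall by (simp add: Re_divide_of_nat)
qed

definition ah :: "'n::finite op \<Rightarrow> bool" where
  "ah K \<longleftrightarrow> (\<forall>i j. K$i$j = - cnj (K$j$i))"

definition adj :: "'n::finite op \<Rightarrow> 'n op" where
  "adj A = (\<chi> i j. cnj (A$j$i))"

lemma adj_nth[simp]: "adj A $ i $ j = cnj (A$j$i)"
  by (simp add: adj_def)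

lemma herm_nth: "hermitian A \<Longrightarrow> A$i$j = cnj (A$j$i)"
  unfolding hermitian_def by blast

lemma ah_nth: "ah A \<Longrightarrow> A$i$j = - cnj (A$j$i)"
  unfolding ah_def by blast

lemma hermitian_add: assumes "hermitian A" "hermitian B" shows "hermitian (A + B)"
  unfolding hermitian_def
proof (intro allI)
  fix i j
  have "A$i$j = cnj (A$j$i)" "B$i$j = cnj (B$j$i)" using assms herm_nth by blast+
  thus "(A + B)$i$j = cnj ((A + B)$j$i)" by (simp only: vector_add_component complex_cnj_add)
qed

lemma hermitian_diff: assumes "hermitian A" "hermitian B" shows "hermitian (A - B)"
  unfolding hermitian_def
proof (intro allI)
  fix i j
  have "A$i$j = cnj (A$j$i)" "B$i$j = cnj (B$j$i)" using assms herm_nth by blast+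
  thus "(A - B)$i$j = cnj ((A - B)$j$i)" by (simp only: vector_minus_component complex_cnj_diff)
qed

lemma hermitian_uminus: assumes "hermitian A" shows "hermitian (- A)"
  unfolding hermitian_def
proof (intro allI)
  fix i j
  have "A$i$j = cnj (A$j$i)" using assms herm_nth by blast
  thus "(- A)$i$j = cnj ((- A)$j$i)" by (simp only: vector_uminus_component complex_cnj_minus)
qed

lemma hermitian_scaleR: assumes "hermitian A" shows "hermitian (c *\<^sub>R A)"
  unfolding hermitian_def
proof (intro allI)
  fix i j
  have "A$i$j = cnj (A$j$i)" using assms herm_nth by blast
  thus "(c *\<^sub>R A)$i$j = cnj ((c *\<^sub>R A)$j$i)"
    by (simp only: scaleR_nth2 complex_cnj_mult complex_cnj_complex_of_real)
qed

lemma ah_add: assumes "ah A" "ah B" shows "ah (A + B)"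
  unfolding ah_def
proof (intro allI)
  fix i j
  have "A$i$j = - cnj (A$j$i)" "B$i$j = - cnj (B$j$i)" using assms ah_nth by blast+
  thus "(A + B)$i$j = - cnj ((A + B)$j$i)" by (simp only: vector_add_component complex_cnj_add minus_add_distrib)
qed

lemma ah_scaleR: assumes "ah A" shows "ah (c *\<^sub>R A)"
  unfolding ah_def
proof (intro allI)
  fix i j
  have "A$i$j = - cnj (A$j$i)" using assms ah_nth by blast
  thus "(c *\<^sub>R A)$i$j = - cnj ((c *\<^sub>R A)$j$i)"
    by (simp only: scaleR_nth2 complex_cnj_mult complex_cnj_complex_of_real mult_minus_right)
qed

lemma hermitian_rdiag: "hermitian (rdiag l)"
  unfolding hermitian_def rdiag_def by simp

lemma psd_add: assumes "psd A" "psd B" shows "psd (A + B)"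
  using assms unfolding psd_qf qf_add by (simp add: hermitian_add)

lemma psd_scaleR: assumes "psd A" "0 \<le> c" shows "psd (c *\<^sub>R A)"
  using assms unfolding psd_qf qf_scaleR by (simp add: hermitian_scaleR)

lemma psd_zero: "psd 0"
  unfolding psd_qf hermitian_def qf_def by simp

lemma ah_zero: "ah 0"
  unfolding ah_def by simp

lemma herm_ah_zero: assumes "hermitian K" "ah K" shows "K = 0"
proof (rule op_eqI)
  fix i j
  have "K$i$j = cnj (K$j$i)" "K$i$j = - cnj (K$j$i)" using assms herm_nth ah_nth by blast+
  moreover have "\<forall>a c::complex. a = c \<longrightarrow> a = - c \<longrightarrow> a = 0" by auto
  ultimately show "K$i$j = 0$i$j" by (metis zero_index)
qed

lemma rdiag_zero: "rdiag (\<lambda>_. 0) = 0"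
  unfolding rdiag_def by (intro op_eqI) simp

lemma inner_op: "inner (Y::'n::finite op) M = (\<Sum>i\<in>UNIV. \<Sum>j\<in>UNIV. Re (cnj (Y$i$j) * M$i$j))"
  unfolding inner_vec_def inner_complex_def by simp

lemma inner_rdiag: "inner (Y::'n::finite op) (rdiag l) = (\<Sum>i\<in>UNIV. l i * Re (Y$i$i))"
proof -
  have "(\<Sum>j\<in>UNIV. Re (cnj (Y$i$j) * rdiag l $i$j)) = l i * Re (Y$i$i)" for i
    by (rule trans[OF sum_one[where i=i]]) (simp_all add: rdiag_def)
  thus ?thesis unfolding inner_op by simp
qed

definition feas :: "'n::finite op \<Rightarrow> ('n \<Rightarrow> real) set" where
  "feas \<rho> = {l. psd (rdiag l - \<rho>)}"

definition tstar :: "'n::finite op \<Rightarrow> real" where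
  "tstar \<rho> = Inf ((\<lambda>l. sum l UNIV) ` feas \<rho>)"

lemma trace_Re: assumes "density \<rho>" shows "(\<Sum>i\<in>UNIV. Re (\<rho>$i$i)) = 1"
proof -
  have "trace \<rho> = 1" using assms unfolding density_def by blast
  hence "Re (trace \<rho>) = 1" by simp
  thus ?thesis unfolding trace_def Re_sum .
qed

lemma feas_lower:
  assumes "density \<rho>" "l \<in> feas \<rho>" shows "1 \<le> sum l UNIV"
proof -
  have "Re (\<rho>$i$i) \<le> l i" for i
    using psd_diag_nonneg[of "rdiag l - \<rho>" i] assms(2) unfolding feas_def rdiag_def by simp
  hence "(\<Sum>i\<in>UNIV. Re (\<rho>$i$i)) \<le> sum l UNIV" by (intro sum_mono) 
  thus ?thesis using trace_Re[OF assms(1)] by simp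
qed

lemma density_herm: "density \<rho> \<Longrightarrow> hermitian \<rho>"
  unfolding density_def psd_qf by blast

lemma feas_nonempty: assumes "density \<rho>" shows "feas \<rho> \<noteq> {}"
proof -
  have h: "hermitian (- \<rho>)" using hermitian_uminus density_herm[OF assms] by blast
  have "rdiag (\<lambda>_. \<Sum>i\<in>UNIV. \<Sum>j\<in>UNIV. cmod ((-\<rho>)$i$j)) + - \<rho> = rdiag (\<lambda>_. \<Sum>i\<in>UNIV. \<Sum>j\<in>UNIV. cmod ((-\<rho>)$i$j)) - \<rho>"
    by simp
  thus ?thesis using diag_dominant[OF h] unfolding feas_def by auto
qed

lemma tstar_bdd: assumes "density \<rho>" shows "bdd_below ((\<lambda>l. sum l UNIV) ` feas \<rho>)"
  using feas_lower[OF assms] by (intro bdd_belowI[of _ 1]) auto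

lemma tstar_le: assumes "density \<rho>" "l \<in> feas \<rho>" shows "tstar \<rho> \<le> sum l UNIV"
  unfolding tstar_def by (rule cInf_lower) (use assms tstar_bdd in auto)

lemma tstar_ge1: assumes "density \<rho>" shows "1 \<le> tstar \<rho>"
  unfolding tstar_def by (rule cInf_greatest) (use feas_nonempty[OF assms] feas_lower[OF assms] in auto)

lemma tstar_approx: assumes "density \<rho>" "e > 0" shows "\<exists>l\<in>feas \<rho>. sum l UNIV < tstar \<rho> + e"
proof -
  have "Inf ((\<lambda>l. sum l UNIV) ` feas \<rho>) < tstar \<rho> + e" using assms(2) unfolding tstar_def by simp
  then obtain y where "y \<in> (\<lambda>l. sum l UNIV) ` feas \<rho>" "y < tstar \<rho> + e"
    using cInf_lessD feas_nonempty[OF assms(1)] by (metis image_is_empty)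
  thus ?thesis by blast
qed

lemma weak_tstar: assumes "density \<rho>" "E \<in> EPC" shows "Re (sumall (E \<rho>)) \<le> tstar \<rho>"
  unfolding tstar_def
  by (rule cInf_greatest) (use feas_nonempty[OF assms(1)] weak_dual[OF assms(2)] in \<open>auto simp: feas_def\<close>)

definition Cset :: "'n::finite op \<Rightarrow> (real \<times> 'n op) set" where
  "Cset \<rho> = {(sum l UNIV, rdiag l - \<rho> - P + K) | l P K. psd P \<and> ah K}"

definition Tset :: "'n::finite op \<Rightarrow> (real \<times> 'n op) set" where
  "Tset \<rho> = {(s, 0) | s. s < tstar \<rho>}"

lemma convex_Cset: "convex (Cset \<rho>)"
  unfolding convex_def
proof (intro ballI allI impI)
  fix x y and u v :: real
  assume x: "x \<in> Cset \<rho>" and y: "y \<in> Cset \<rho>" and uv: "0 \<le> u" "0 \<le> v" "u + v = 1"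
  obtain l1 P1 K1 where 1: "x = (sum l1 UNIV, rdiag l1 - \<rho> - P1 + K1)" "psd P1" "ah K1"
    using x unfolding Cset_def by blast
  obtain l2 P2 K2 where 2: "y = (sum l2 UNIV, rdiag l2 - \<rho> - P2 + K2)" "psd P2" "ah K2"
    using y unfolding Cset_def by blast
  define l where "l = (\<lambda>i. u * l1 i + v * l2 i)"
  define P where "P = u *\<^sub>R P1 + v *\<^sub>R P2"
  define K where "K = u *\<^sub>R K1 + v *\<^sub>R K2"
  have v: "v = 1 - u" using uv by simp
  have e1: "u * sum l1 UNIV + v * sum l2 UNIV = sum l UNIV"
    unfolding l_def by (simp add: sum.distrib sum_distrib_left)
  have e2: "u *\<^sub>R (rdiag l1 - \<rho> - P1 + K1) + v *\<^sub>R (rdiag l2 - \<rho> - P2 + K2) = rdiag l - \<rho> - P + K"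
  proof (rule op_eqI)
    fix i j
    show "(u *\<^sub>R (rdiag l1 - \<rho> - P1 + K1) + v *\<^sub>R (rdiag l2 - \<rho> - P2 + K2)) $ i $ j = (rdiag l - \<rho> - P + K) $ i $ j"
      unfolding P_def K_def l_def v
      by (simp only: vector_add_component vector_minus_component scaleR_nth2 rdiag_def diagm_nth)
         (cases "i = j", simp_all add: algebra_simps of_real_diff)
  qed
  have "psd P" unfolding P_def using 1 2 uv by (intro psd_add psd_scaleR) auto
  moreover have "ah K" unfolding K_def using 1 2 by (intro ah_add ah_scaleR) auto
  ultimately have mem: "(sum l UNIV, rdiag l - \<rho> - P + K) \<in> Cset \<rho>"
    unfolding Cset_def by blast
  have "u *\<^sub>R x + v *\<^sub>R y = (sum l UNIV, rdiag l - \<rho> - P + K)"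
    unfolding 1(1) 2(1) using e1 e2 by simp
  thus "u *\<^sub>R x + v *\<^sub>R y \<in> Cset \<rho>" using mem by simp
qed

lemma convex_Tset: "convex (Tset (\<rho>::'n::finite op))"
  unfolding convex_def
proof (intro ballI allI impI)
  fix x y and u v :: real
  assume x: "x \<in> Tset \<rho>" and y: "y \<in> Tset \<rho>"
    and uv: "0 \<le> u" "0 \<le> v" "u + v = 1"
  obtain s1 s2 where s: "x = (s1, 0)" "y = (s2, 0)" "s1 < tstar \<rho>" "s2 < tstar \<rho>"
    using x y unfolding Tset_def by blast
  have "u * s1 + v * s2 < tstar \<rho>"
  proof (cases "u = 0")
    case True thus ?thesis using uv s by simp
  next
    case False
    hence "u * s1 < u * tstar \<rho>" using uv s by simp
    moreover have "v * s2 \<le> v * tstar \<rho>" using uv s by (simp add: mult_left_mono)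
    ultimately have "u * s1 + v * s2 < (u + v) * tstar \<rho>" by (simp add: distrib_right)
    thus ?thesis using uv by simp
  qed
  thus "u *\<^sub>R x + v *\<^sub>R y \<in> Tset \<rho>" using s unfolding Tset_def by simp
qed

lemma disjoint_CT: assumes "density \<rho>" shows "Cset \<rho> \<inter> Tset \<rho> = {}"
proof (rule ccontr)
  assume "Cset \<rho> \<inter> Tset \<rho> \<noteq> {}"
  then obtain z where z: "z \<in> Cset \<rho>" "z \<in> Tset \<rho>" by blast
  obtain s where s: "z = (s, 0)" "s < tstar \<rho>" using z(2) unfolding Tset_def by blast
  obtain l P K where lpk: "z = (sum l UNIV, rdiag l - \<rho> - P + K)" "psd P" "ah K"
    using z(1) unfolding Cset_def by blast
  have e: "(s, 0) = (sum l UNIV, rdiag l - \<rho> - P + K)" "psd P" "ah K" "s < tstar \<rho>"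
    using s lpk by auto
  have K: "K = P - (rdiag l - \<rho>)" using e(1) by (simp add: algebra_simps)
  have hP: "hermitian P" using e(2) psd_qf by blast
  have "hermitian K" unfolding K
    by (rule hermitian_diff[OF hP hermitian_diff[OF hermitian_rdiag density_herm[OF assms]]])
  hence "K = 0" using herm_ah_zero e(3) by blast
  hence "P = rdiag l - \<rho>" using K by simp
  hence "l \<in> feas \<rho>" using e(2) unfolding feas_def by simp
  hence "tstar \<rho> \<le> s" using tstar_le[OF assms] e(1) by simp
  thus False using e(4) by simp
qed

lemma lin_zero: assumes "\<And>r::real. r * x \<le> B" shows "x = 0"
proof (rule ccontr)
  assume "x \<noteq> 0"
  hence "((\<bar>B\<bar> + 1) / x) * x = \<bar>B\<bar> + 1" by simp
  moreover have "((\<bar>B\<bar> + 1) / x) * x \<le> B" by (rule assms)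
  ultimately show False by linarith
qed

lemma lin_nonneg: assumes "\<And>c::real. 0 \<le> c \<Longrightarrow> - (c * x) \<le> B" shows "0 \<le> x"
proof (rule ccontr)
  assume "\<not> 0 \<le> x"
  hence x: "x < 0" by simp
  hence "0 \<le> (\<bar>B\<bar> + 1) / (- x)" by (intro divide_nonneg_pos) auto
  hence "- (((\<bar>B\<bar> + 1) / (- x)) * x) \<le> B" by (rule assms)
  moreover have "- (((\<bar>B\<bar> + 1) / (- x)) * x) = \<bar>B\<bar> + 1" using x by simp
  ultimately show False by linarith
qed

lemma inner_real: "inner (a::real) b = a * b" by simp

lemma dual_exists:
  assumes rho: "density \<rho>"
  shows "\<exists>W::'n::finite op. (\<forall>P. psd P \<longrightarrow> 0 \<le> inner W P) \<and> (\<forall>i. Re (W$i$i) = 1)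
            \<and> (\<forall>K. ah K \<longrightarrow> inner W K = 0) \<and> tstar \<rho> \<le> inner W \<rho>"
proof -
  define t where "t = tstar \<rho>"
  have Cne: "Cset \<rho> \<noteq> {}"
  proof -
    have "(sum (\<lambda>_. 0) UNIV, rdiag (\<lambda>_. 0) - \<rho> - 0 + 0) \<in> Cset \<rho>"
      unfolding Cset_def
      by (rule CollectI, rule exI[of _ "\<lambda>_. 0"], rule exI[of _ 0], rule exI[of _ 0]) (simp add: psd_zero ah_zero)
    thus ?thesis by blast
  qed
  have Tne: "Tset \<rho> \<noteq> {}"
  proof -
    have "(t - 1, 0) \<in> Tset \<rho>" unfolding Tset_def t_def by auto
    thus ?thesis by blast
  qed
  obtain a b where ab: "a \<noteq> 0" "\<forall>x\<in>Cset \<rho>. inner a x \<le> b" "\<forall>x\<in>Tset \<rho>. b \<le> inner a x"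
    using separating_hyperplane_sets[OF convex_Cset convex_Tset Cne Tne disjoint_CT[OF rho]] by blast
  obtain a0 Y where a: "a = (a0, Y)" by (cases a)
  have Cgen: "a0 * sum l UNIV + (inner Y (rdiag l) - inner Y \<rho> - inner Y P + inner Y K) \<le> b"
    if "psd P" "ah K" for l P K
  proof -
    have "(sum l UNIV, rdiag l - \<rho> - P + K) \<in> Cset \<rho>" unfolding Cset_def using that by blast
    hence "inner a (sum l UNIV, rdiag l - \<rho> - P + K) \<le> b" using ab(2) by blast
    thus ?thesis unfolding a inner_Pair inner_real inner_add_right inner_diff_right .
  qed
  have Tgen: "b \<le> a0 * s" if "s < t" for s
  proof -
    have "(s, 0) \<in> Tset \<rho>" unfolding Tset_def using that by (auto simp: t_def)
    hence "b \<le> inner a (s, 0)" using ab(3) by blast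
    thus ?thesis unfolding a inner_Pair inner_real by simp
  qed
  have a0: "a0 \<le> 0"
  proof (rule ccontr)
    assume "\<not> a0 \<le> 0"
    hence ap: "a0 > 0" by simp
    define s where "s = min (t - 1) ((b - 1) / a0)"
    have "s < t" unfolding s_def by simp
    hence "b \<le> a0 * s" by (rule Tgen)
    moreover have "a0 * s \<le> a0 * ((b - 1) / a0)" unfolding s_def using ap
      by (intro mult_left_mono) auto
    moreover have "a0 * ((b - 1) / a0) = b - 1" using ap by simp
    ultimately show False by linarith
  qed
  have bt: "b \<le> a0 * t"
  proof (rule ccontr)
    assume nb: "\<not> b \<le> a0 * t"
    show False
    proof (cases "a0 = 0")
      case True thus False using Tgen[of "t - 1"] nb by simp
    next
      case False
      hence an: "a0 < 0" using a0 by simp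
      define q where "q = b / a0"
      define s where "s = (q + t) / 2"
      have "q < t" using nb an unfolding q_def by (simp add: divide_less_eq mult.commute)
      hence "s < t" "q < s" by (simp_all add: s_def)
      hence "b \<le> a0 * s" "a0 * s < a0 * q" using Tgen an by (auto simp: mult_less_cancel_left)
      moreover have "a0 * q = b" using an unfolding q_def by simp
      ultimately show False by linarith
    qed
  qed
  have dualcone: "0 \<le> inner Y P" if "psd P" for P
  proof (rule lin_nonneg[where B = "b + inner Y \<rho>"])
    fix c :: real assume c: "0 \<le> c"
    show "- (c * inner Y P) \<le> b + inner Y \<rho>"
      using Cgen[OF psd_scaleR[OF that c] ah_zero, of "\<lambda>_. 0"] by (simp add: rdiag_zero)
  qed
  have diagY: "Re (Y$i$i) = - a0" for i
  proof -
    have "a0 + Re (Y$i$i) = 0"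
    proof (rule lin_zero[where B = "b + inner Y \<rho>"])
      fix r :: real
      define l where "l = (\<lambda>k. if k = i then r else 0)"
      have "a0 * sum l UNIV + (inner Y (rdiag l) - inner Y \<rho> - inner Y 0 + inner Y 0) \<le> b"
        using Cgen[OF psd_zero ah_zero, of l] .
      moreover have "sum l UNIV = r" unfolding l_def by simp
      moreover have "inner Y (rdiag l) = r * Re (Y$i$i)" unfolding inner_rdiag l_def
        by (rule trans[OF sum_one[where i=i]]) auto
      ultimately show "r * (a0 + Re (Y$i$i)) \<le> b + inner Y \<rho>" by (simp add: algebra_simps)
    qed
    thus ?thesis by simp
  qed
  have ahY: "inner Y K = 0" if "ah K" for K
  proof (rule lin_zero[where B = "b + inner Y \<rho>"])
    fix r :: real
    show "r * inner Y K \<le> b + inner Y \<rho>"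
      using Cgen[OF psd_zero ah_scaleR[OF that], of "\<lambda>_. 0" r] by (simp add: rdiag_zero)
  qed
  have rhoY: "- inner Y \<rho> \<le> b"
    using Cgen[OF psd_zero ah_zero, of "\<lambda>_. 0"] by (simp add: rdiag_zero)
  have a0n: "a0 < 0"
  proof (rule ccontr)
    assume "\<not> a0 < 0"
    hence a00: "a0 = 0" using a0 by simp
    hence b0: "b \<le> 0" using bt by simp
    define H where "H = (1/2::real) *\<^sub>R (Y + adj Y)"
    define K where "K = (1/2::real) *\<^sub>R (Y - adj Y)"
    define A where "A = - (\<rho> + H)"
    define l where "l = (\<lambda>_::'n. \<Sum>i\<in>UNIV. \<Sum>j\<in>UNIV. cmod (A$i$j))"
    define P where "P = rdiag l + A"
    have hYa: "hermitian (Y + adj Y)" unfolding hermitian_def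
      by (simp add: add.commute)
    have hH: "hermitian H" unfolding H_def by (rule hermitian_scaleR[OF hYa])
    have aK: "ah K" unfolding K_def ah_def scaleR_nth2 by (simp add: algebra_simps)
    have hA: "hermitian A" unfolding A_def
      by (rule hermitian_uminus[OF hermitian_add[OF density_herm[OF rho] hH]])
    have pP: "psd P" unfolding P_def l_def by (rule diag_dominant[OF hA])
    have HK: "H + K = Y" unfolding H_def K_def
    proof (rule op_eqI)
      fix i j
      show "((1/2::real) *\<^sub>R (Y + adj Y) + (1/2::real) *\<^sub>R (Y - adj Y)) $ i $ j = Y $ i $ j"
        by (simp only: vector_add_component vector_minus_component scaleR_nth2) (simp add: algebra_simps)
    qed
    have "rdiag l - \<rho> - P + K = Y" unfolding P_def A_def using HK by (simp add: algebra_simps)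
    moreover have "(sum l UNIV, rdiag l - \<rho> - P + K) \<in> Cset \<rho>" unfolding Cset_def using pP aK by blast
    ultimately have "inner a (sum l UNIV, Y) \<le> b" using ab(2) by simp
    hence "inner Y Y \<le> 0" using b0 unfolding a a00 inner_Pair inner_real by simp
    hence "Y = 0" by (metis antisym inner_ge_zero inner_eq_zero_iff)
    thus False using ab(1) unfolding a a00 by (simp add: zero_prod_def)
  qed
  define al where "al = - a0"
  have alp: "al > 0" unfolding al_def using a0n by simp
  define W where "W = (1 / al) *\<^sub>R Y"
  have "\<forall>P. psd P \<longrightarrow> 0 \<le> inner W P"
    unfolding W_def inner_scaleR_left using dualcone alp by simp
  moreover have "\<forall>i. Re (W$i$i) = 1"
    unfolding W_def scaleR_nth2 using diagY alp by (simp add: al_def)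
  moreover have "\<forall>K. ah K \<longrightarrow> inner W K = 0"
    unfolding W_def inner_scaleR_left using ahY by simp
  moreover have "tstar \<rho> \<le> inner W \<rho>"
  proof -
    have "al * t \<le> inner Y \<rho>" using rhoY bt unfolding al_def by simp
    hence "t \<le> inner Y \<rho> / al" using alp by (simp add: field_simps)
    thus ?thesis unfolding W_def inner_scaleR_left t_def by simp
  qed
  ultimately show ?thesis by blast
qed

lemma sum_pair: "sum f (A \<times> B) = (\<Sum>a\<in>A. \<Sum>b\<in>B. f (a, b))"
  by (subst sum.cartesian_product) simp

lemma reshuffle:
  fixes x :: "nat \<times> 'n::finite \<Rightarrow> complex" and g :: "'n \<Rightarrow> 'n \<Rightarrow> complex"
  shows "(\<Sum>p\<in>{..<k} \<times> UNIV. \<Sum>q\<in>{..<k} \<times> UNIV. cnj (x p) * (g (snd p) (snd q) * M p q) * x q)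
       = (\<Sum>i\<in>UNIV. \<Sum>j\<in>UNIV. g i j * (\<Sum>a<k. \<Sum>b<k. cnj (x (a,i)) * M (a,i) (b,j) * x (b,j)))"
proof -
  define F where "F = (\<lambda>a i b j. cnj (x (a,i)) * (g i j * M (a,i) (b,j)) * x (b,j))"
  have "(\<Sum>p\<in>{..<k} \<times> UNIV. \<Sum>q\<in>{..<k} \<times> UNIV. cnj (x p) * (g (snd p) (snd q) * M p q) * x q)
      = (\<Sum>a<k. \<Sum>i\<in>UNIV. \<Sum>b<k. \<Sum>j\<in>UNIV. F a i b j)"
    unfolding sum_pair F_def by simp
  also have "\<dots> = (\<Sum>i\<in>UNIV. \<Sum>a<k. \<Sum>b<k. \<Sum>j\<in>UNIV. F a i b j)" by (rule sum.swap)
  also have "\<dots> = (\<Sum>i\<in>UNIV. \<Sum>a<k. \<Sum>j\<in>UNIV. \<Sum>b<k. F a i b j)"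
    by (rule sum.cong[OF refl], rule sum.cong[OF refl], rule sum.swap)
  also have "\<dots> = (\<Sum>i\<in>UNIV. \<Sum>j\<in>UNIV. \<Sum>a<k. \<Sum>b<k. F a i b j)"
    by (rule sum.cong[OF refl], rule sum.swap)
  also have "\<dots> = (\<Sum>i\<in>UNIV. \<Sum>j\<in>UNIV. g i j * (\<Sum>a<k. \<Sum>b<k. cnj (x (a,i)) * M (a,i) (b,j) * x (b,j)))"
    unfolding F_def by (simp add: sum_distrib_left mult_ac)
  finally show ?thesis .
qed

definition schur :: "'n::finite op \<Rightarrow> 'n op \<Rightarrow> 'n op" where
  "schur G A = (\<chi> i j. G$i$j * A$i$j)"

lemma schur_nth[simp]: "schur G A $ i $ j = G$i$j * A$i$j"
  by (simp add: schur_def)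

lemma schur_EPC:
  assumes hG: "hermitian G" and dG: "\<And>i. G$i$i = 1"
    and pos: "\<And>N. psd N \<Longrightarrow> 0 \<le> Re (\<Sum>i\<in>UNIV. \<Sum>j\<in>UNIV. G$i$j * N$i$j)"
  shows "schur G \<in> EPC"
proof -
  have lin: "clinear_map (schur G)" unfolding clinear_map_def
  proof (intro conjI allI)
    fix A B show "schur G (A + B) = schur G A + schur G B"
      by (intro op_eqI) (simp add: distrib_left)
  next
    fix c A show "schur G (mscale c A) = mscale c (schur G A)"
      by (intro op_eqI) (simp add: mscale_def mult.left_commute)
  qed
  have tp: "trace_preserving (schur G)" unfolding trace_preserving_def trace_def using dG by simp
  have cp: "completely_positive (schur G)" unfolding completely_positive_def
  proof (intro allI impI)
    fix k and M :: "nat \<times> 'a \<Rightarrow> nat \<times> 'a \<Rightarrow> complex"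
    assume M: "ext_psd k M"
    have Mh: "M p q = cnj (M q p)" if "p \<in> {..<k} \<times> UNIV" "q \<in> {..<k} \<times> UNIV" for p q
      using M that unfolding ext_psd_def by blast
    have Mq: "0 \<le> Re (\<Sum>p\<in>{..<k} \<times> UNIV. \<Sum>q\<in>{..<k} \<times> UNIV. cnj (y p) * M p q * y q)" for y
      using M unfolding ext_psd_def by blast
    have em: "ext_map (schur G) M p q = G $ snd p $ snd q * M p q" for p q :: "nat \<times> 'a"
      unfolding ext_map_def by simp
    show "ext_psd k (ext_map (schur G) M)" unfolding ext_psd_def
    proof (intro conjI ballI allI)
      fix p q :: "nat \<times> 'a" assume pq: "p \<in> {..<k} \<times> UNIV" "q \<in> {..<k} \<times> UNIV"
      have "G $ snd p $ snd q = cnj (G $ snd q $ snd p)" by (rule herm_nth[OF hG])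
      moreover have "M p q = cnj (M q p)" by (rule Mh[OF pq])
      ultimately show "ext_map (schur G) M p q = cnj (ext_map (schur G) M q p)"
        unfolding em by simp
    next
      fix x :: "nat \<times> 'a \<Rightarrow> complex"
      define N :: "'a op" where "N = (\<chi> i j. \<Sum>a<k. \<Sum>b<k. cnj (x (a,i)) * M (a,i) (b,j) * x (b,j))"
      have Nn: "N$i$j = (\<Sum>a<k. \<Sum>b<k. cnj (x (a,i)) * M (a,i) (b,j) * x (b,j))" for i j
        unfolding N_def by simp
      have hN: "hermitian N" unfolding hermitian_def
      proof (intro allI)
        fix i j
        have "cnj (N$j$i) = (\<Sum>a<k. \<Sum>b<k. x (a,j) * cnj (M (a,j) (b,i)) * cnj (x (b,i)))"
          unfolding Nn by (simp add: cnj_sum)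
        also have "\<dots> = (\<Sum>a<k. \<Sum>b<k. cnj (x (b,i)) * M (b,i) (a,j) * x (a,j))"
        proof (intro sum.cong refl)
          fix a b assume "a \<in> {..<k}" "b \<in> {..<k}"
          hence "M (b,i) (a,j) = cnj (M (a,j) (b,i))" by (intro Mh) auto
          thus "x (a,j) * cnj (M (a,j) (b,i)) * cnj (x (b,i)) = cnj (x (b,i)) * M (b,i) (a,j) * x (a,j)"
            by (simp add: mult_ac)
        qed
        also have "\<dots> = N$i$j" unfolding Nn by (rule sum.swap)
        finally show "N$i$j = cnj (N$j$i)" by simp
      qed
      have pN: "psd N" unfolding psd_qf
      proof (intro conjI allI hN)
        fix z :: "complex^'a"
        define y where "y = (\<lambda>p. x p * z $ snd p)"
        have "qf N z = (\<Sum>i\<in>UNIV. \<Sum>j\<in>UNIV. (cnj (z$i) * z$j) * N$i$j)"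
          unfolding qf_def by (simp add: mult_ac)
        also have "\<dots> = (\<Sum>p\<in>{..<k} \<times> UNIV. \<Sum>q\<in>{..<k} \<times> UNIV. cnj (x p) * ((cnj (z $ snd p) * z $ snd q) * M p q) * x q)"
          using reshuffle[of x "\<lambda>i j. cnj (z$i) * z$j" M k] unfolding Nn by simp
        also have "\<dots> = (\<Sum>p\<in>{..<k} \<times> UNIV. \<Sum>q\<in>{..<k} \<times> UNIV. cnj (y p) * M p q * y q)"
          unfolding y_def by (simp add: mult_ac)
        finally show "0 \<le> Re (qf N z)" using Mq by simp
      qed
      have "(\<Sum>p\<in>{..<k} \<times> UNIV. \<Sum>q\<in>{..<k} \<times> UNIV. cnj (x p) * ext_map (schur G) M p q * x q)
          = (\<Sum>i\<in>UNIV. \<Sum>j\<in>UNIV. G$i$j * N$i$j)"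
        unfolding em Nn using reshuffle[of x "\<lambda>i j. G$i$j" M k] by simp
      thus "0 \<le> Re (\<Sum>p\<in>{..<k} \<times> UNIV. \<Sum>q\<in>{..<k} \<times> UNIV. cnj (x p) * ext_map (schur G) M p q * x q)"
        using pos[OF pN] by simp
    qed
  qed
  have "schur G \<rho> $ i $ i = \<rho> $ i $ i" for \<rho> i using dG by simp
  thus ?thesis unfolding EPC_def CPTP_def using lin tp cp by blast
qed

lemma inner_adj_ah: assumes "ah K" shows "inner (adj W) K = - inner W (K::'n::finite op)"
proof -
  have t: "Re (cnj (adj W $ i $ j) * K$i$j) = - Re (cnj (W$j$i) * K$j$i)" for i j
  proof -
    have "K$i$j = - cnj (K$j$i)" using assms ah_nth by blast
    hence "cnj (adj W $ i $ j) * K$i$j = - cnj (cnj (W$j$i) * K$j$i)" by simp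
    thus ?thesis by simp
  qed
  have "inner (adj W) K = (\<Sum>i\<in>UNIV. \<Sum>j\<in>UNIV. - Re (cnj (W$j$i) * K$j$i))"
    unfolding inner_op t ..
  also have "\<dots> = - (\<Sum>j\<in>UNIV. \<Sum>i\<in>UNIV. Re (cnj (W$j$i) * K$j$i))"
    by (subst sum.swap) (simp only: sum_negf)
  also have "\<dots> = - inner W K" unfolding inner_op ..
  finally show ?thesis .
qed

lemma strong_dual:
  assumes rho: "density \<rho>"
  shows "\<exists>E\<in>EPC. tstar \<rho> \<le> Re (sumall (E \<rho>))"
proof -
  obtain W :: "'a op" where W: "\<forall>P. psd P \<longrightarrow> 0 \<le> inner W P" "\<forall>i. Re (W$i$i) = 1"
      "\<forall>K. ah K \<longrightarrow> inner W K = 0" "tstar \<rho> \<le> inner W \<rho>"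
    using dual_exists[OF rho] by blast
  define K0 where "K0 = W - adj W"
  have aK0: "ah K0" unfolding K0_def ah_def by (simp add: algebra_simps)
  have "inner K0 K0 = inner W K0 - inner (adj W) K0" unfolding K0_def by (simp add: inner_diff_left)
  also have "\<dots> = 0" using W(3) aK0 inner_adj_ah[OF aK0, of W] by simp
  finally have "K0 = 0" by simp
  hence Wadj: "W$i$j = cnj (W$j$i)" for i j unfolding K0_def by (metis adj_nth eq_iff_diff_eq_0)
  define G :: "'a op" where "G = (\<chi> i j. cnj (W$i$j))"
  have Gn: "G$i$j = cnj (W$i$j)" for i j unfolding G_def by simp
  have hG: "hermitian G" unfolding hermitian_def Gn
  proof (intro allI)
    fix i j
    have "W$j$i = cnj (W$i$j)" by (rule Wadj)
    thus "cnj (W$i$j) = cnj (cnj (W$j$i))" by simp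
  qed
  have dG: "G$i$i = 1" for i
  proof -
    have "W$i$i = complex_of_real (Re (W$i$i))" by (rule hermitian_diag_real) (unfold hermitian_def, use Wadj in blast)
    thus ?thesis unfolding Gn using W(2) by simp
  qed
  have pr: "Re (\<Sum>i\<in>UNIV. \<Sum>j\<in>UNIV. G$i$j * N$i$j) = inner W N" for N
    unfolding inner_op Gn by simp
  have m: "schur G \<in> EPC"
    by (rule schur_EPC[OF hG dG]) (use pr W(1) in auto)
  have e: "Re (sumall (schur G \<rho>)) = inner W \<rho>"
    unfolding sumall_def schur_nth pr[symmetric] ..
  show ?thesis
  proof (rule bexI[OF _ m])
    show "tstar \<rho> \<le> Re (sumall (schur G \<rho>))" using e W(4) by simp
  qed
qed

lemma mult_hamil: "(A ** hamiltonian En) $ i $ j = A$i$j * complex_of_real (En j)"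
  unfolding matrix_matrix_mult_def hamiltonian_def
  by (simp, rule trans[OF sum_one[where i=j]]) auto

lemma hamil_mult: "(hamiltonian En ** A) $ i $ j = complex_of_real (En i) * A$i$j"
  unfolding matrix_matrix_mult_def hamiltonian_def
  by (simp, rule trans[OF sum_one[where i=i]]) auto

lemma comm_diag:
  assumes "inj En" "\<gamma> ** hamiltonian En = hamiltonian En ** \<gamma>" "i \<noteq> j"
  shows "\<gamma>$i$j = 0"
proof -
  have "\<gamma>$i$j * complex_of_real (En j) = complex_of_real (En i) * \<gamma>$i$j"
    using arg_cong[OF assms(2), of "\<lambda>A. A$i$j"] unfolding mult_hamil hamil_mult .
  hence "\<gamma>$i$j * complex_of_real (En j - En i) = 0" by (simp add: algebra_simps)
  moreover have "En j - En i \<noteq> 0" using assms(1,3) by (metis eq_iff_diff_eq_0 injD)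
  ultimately show ?thesis by simp
qed

lemma rdiag_comm: "rdiag l ** hamiltonian En = hamiltonian En ** rdiag l"
  by (intro op_eqI) (simp add: mult_hamil hamil_mult rdiag_def mult.commute)

lemma Rcoh_lower:
  assumes En: "inj En" and rho: "density \<rho>"
  shows "ereal (log 2 (tstar \<rho>)) \<le> Rcoh_max En \<rho>"
  unfolding Rcoh_max_def
proof (rule Inf_greatest)
  fix x assume "x \<in> {Dmax \<rho> \<gamma> |\<gamma>. density \<gamma> \<and> \<gamma> ** hamiltonian En = hamiltonian En ** \<gamma>}"
  then obtain \<gamma> where g: "x = Dmax \<rho> \<gamma>" "density \<gamma>" "\<gamma> ** hamiltonian En = hamiltonian En ** \<gamma>"
    by blast
  have hg: "hermitian \<gamma>" using g(2) density_herm by blast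
  show "ereal (log 2 (tstar \<rho>)) \<le> x" unfolding g(1) Dmax_def
  proof (rule Inf_greatest)
    fix y assume "y \<in> {ereal s |s. 0 \<le> s \<and> psd (mscale (complex_of_real (2 powr s)) \<gamma> - \<rho>)}"
    then obtain s where s: "y = ereal s" "psd (mscale (complex_of_real (2 powr s)) \<gamma> - \<rho>)" by blast
    define l where "l = (\<lambda>i. 2 powr s * Re (\<gamma>$i$i))"
    have "mscale (complex_of_real (2 powr s)) \<gamma> = rdiag l"
    proof (rule op_eqI)
      fix i j
      show "mscale (complex_of_real (2 powr s)) \<gamma> $ i $ j = rdiag l $ i $ j"
      proof (cases "i = j")
        case True
        have "\<gamma>$i$i = complex_of_real (Re (\<gamma>$i$i))" by (rule hermitian_diag_real[OF hg])
        thus ?thesis using True unfolding mscale_def rdiag_def l_def by (simp add: of_real_mult)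
      next
        case False thus ?thesis using comm_diag[OF En g(3) False] unfolding mscale_def rdiag_def by simp
      qed
    qed
    hence "l \<in> feas \<rho>" using s(2) unfolding feas_def by simp
    hence "tstar \<rho> \<le> sum l UNIV" by (rule tstar_le[OF rho])
    also have "sum l UNIV = 2 powr s" unfolding l_def sum_distrib_left[symmetric] trace_Re[OF g(2)] by simp
    finally have "tstar \<rho> \<le> 2 powr s" .
    hence "log 2 (tstar \<rho>) \<le> s" using tstar_ge1[OF rho] by (subst log_le_iff) auto
    thus "ereal (log 2 (tstar \<rho>)) \<le> y" unfolding s(1) by simp
  qed
qed

lemma Rcoh_upper:
  assumes En: "inj En" and rho: "density \<rho>"
  shows "Rcoh_max En \<rho> \<le> ereal (log 2 (tstar \<rho>))"
proof (rule ereal_le_epsilon2)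
  fix e :: real assume e: "0 < e"
  define t where "t = tstar \<rho>"
  have t1: "1 \<le> t" unfolding t_def by (rule tstar_ge1[OF rho])
  have "1 < 2 powr e" using e by simp
  hence "0 < t * 2 powr e - t" using t1 by (simp add: algebra_simps)
  then obtain l where l: "l \<in> feas \<rho>" "sum l UNIV < t + (t * 2 powr e - t)"
    using tstar_approx[OF rho] unfolding t_def by blast
  define \<sigma> where "\<sigma> = sum l UNIV"
  have s1: "1 \<le> \<sigma>" unfolding \<sigma>_def by (rule feas_lower[OF rho l(1)])
  have lt: "\<sigma> < t * 2 powr e" using l(2) unfolding \<sigma>_def by simp
  define \<gamma> where "\<gamma> = rdiag (\<lambda>i. l i / \<sigma>)"
  have psdl: "psd (rdiag l - \<rho>)" using l(1) unfolding feas_def by simp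
  have lnn: "0 \<le> l i" for i
  proof -
    have "0 \<le> Re ((rdiag l - \<rho>)$i$i)" by (rule psd_diag_nonneg[OF psdl])
    moreover have "0 \<le> Re (\<rho>$i$i)" using rho unfolding density_def by (intro psd_diag_nonneg) blast
    ultimately show ?thesis unfolding rdiag_def by simp
  qed
  have dg: "density \<gamma>" unfolding density_def \<gamma>_def rdiag_def
  proof
    show "psd (diagm (\<lambda>i. complex_of_real (l i / \<sigma>)))"
      by (rule psd_diagm) (use lnn s1 in auto)
    have "sum (\<lambda>i. l i / \<sigma>) UNIV = 1" unfolding sum_divide_distrib[symmetric] \<sigma>_def
      using s1 unfolding \<sigma>_def by simp
    thus "trace (diagm (\<lambda>i. complex_of_real (l i / \<sigma>))) = 1" unfolding trace_diagm
      by (metis of_real_1 of_real_sum)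
  qed
  define s where "s = log 2 \<sigma>"
  have s0: "0 \<le> s" unfolding s_def using s1 by simp
  have "mscale (complex_of_real (2 powr s)) \<gamma> = rdiag l"
  proof -
    have "2 powr s = \<sigma>" unfolding s_def using s1 by simp
    thus ?thesis unfolding \<gamma>_def rdiag_def mscale_def using s1
      by (intro op_eqI) simp
  qed
  hence "s \<in> {s. 0 \<le> s \<and> psd (mscale (complex_of_real (2 powr s)) \<gamma> - \<rho>)}" using s0 psdl by simp
  hence "Dmax \<rho> \<gamma> \<le> ereal s" unfolding Dmax_def by (intro Inf_lower) blast
  moreover have "Rcoh_max En \<rho> \<le> Dmax \<rho> \<gamma>"
    unfolding Rcoh_max_def using dg rdiag_comm[of _ En] unfolding \<gamma>_def by (intro Inf_lower) blast
  moreover have "s < log 2 t + e"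
  proof -
    have "2 powr (log 2 t + e) = t * 2 powr e" using t1 by (simp add: powr_add)
    thus ?thesis unfolding s_def using lt s1 by (subst log_less_iff) auto
  qed
  ultimately show "Rcoh_max En \<rho> \<le> ereal (log 2 (tstar \<rho>)) + ereal e"
    unfolding t_def by (metis order_trans ereal_less_eq(3) less_imp_le plus_ereal.simps(1))
qed

lemma passive_exists: "\<exists>\<tau>::'n::finite op. passive_state En \<tau>"
proof -
  define d where "d = real CARD('n)"
  have d0: "d > 0" unfolding d_def by simp
  define \<tau> :: "'n op" where "\<tau> = rdiag (\<lambda>_. 1 / d)"
  have "psd \<tau>" unfolding \<tau>_def rdiag_def by (rule psd_diagm) (use d0 in auto)
  moreover have "trace \<tau> = 1" unfolding \<tau>_def rdiag_def trace_diagm using d0 by (simp add: d_def)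
  ultimately have "passive_state En \<tau>" unfolding passive_state_def density_def
    by (auto simp: \<tau>_def rdiag_def)
  thus ?thesis by blast
qed

lemma ratio_set:
  assumes "E \<in> EPC"
  shows "{Re (phi_plus_exp (E \<rho>)) / Re (phi_plus_exp (E \<tau>)) | \<tau>. passive_state En \<tau>} = {Re (sumall (E \<rho>))}"
    (is "?S = _")
proof -
  have v: "Re (phi_plus_exp (E \<rho>)) / Re (phi_plus_exp (E \<tau>)) = Re (sumall (E \<rho>))"
    if "passive_state En \<tau>" for \<tau>
  proof -
    have "Re (phi_plus_exp (E \<rho>)) / Re (phi_plus_exp (E \<tau>)) = real CARD('a) * Re (phi_plus_exp (E \<rho>))"
      unfolding phi_passive[OF assms that] by simp
    thus ?thesis unfolding Re_phi .
  qed
  obtain \<tau>0 where t0: "passive_state En (\<tau>0::'a op)" using passive_exists by blast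
  have "?S \<subseteq> {Re (sumall (E \<rho>))}" using v by auto
  moreover have "Re (sumall (E \<rho>)) \<in> ?S" using v[OF t0, symmetric] t0 by blast
  ultimately show ?thesis by blast
qed

theorem mainTheorem16:
  fixes En :: "'n::finite \<Rightarrow> real" and \<rho> :: "complex^'n^'n"
  assumes "inj En"
    and "density \<rho>"
  shows "(\<forall>E\<in>EPC. \<exists>w. is_min {Re (phi_plus_exp (E \<rho>)) / Re (phi_plus_exp (E \<tau>)) | \<tau>. passive_state En \<tau>} w)
    \<and> is_max {w. \<exists>E\<in>EPC. is_min {Re (phi_plus_exp (E \<rho>)) / Re (phi_plus_exp (E \<tau>)) | \<tau>. passive_state En \<tau>} w}
         (2 powr real_of_ereal (Rcoh_max En \<rho>))
    \<and> is_max {real CARD('n) * Re (phi_plus_exp (E \<rho>)) | E. E \<in> EPC}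
         (2 powr real_of_ereal (Rcoh_max En \<rho>))
    \<and> Rcoh_max En \<rho> \<noteq> \<infinity>"
proof -
  define t where "t = tstar \<rho>"
  have t1: "1 \<le> t" unfolding t_def by (rule tstar_ge1[OF assms(2)])
  have R: "Rcoh_max En \<rho> = ereal (log 2 t)"
    unfolding t_def using Rcoh_lower[OF assms] Rcoh_upper[OF assms] by (rule antisym[rotated])
  have val: "2 powr real_of_ereal (Rcoh_max En \<rho>) = t" unfolding R using t1 by simp
  define S where "S = {Re (sumall (E \<rho>)) | E. E \<in> EPC}"
  have maxS: "is_max S t" unfolding is_max_def
  proof
    obtain E where E: "E \<in> EPC" "t \<le> Re (sumall (E \<rho>))"
      using strong_dual[OF assms(2)] unfolding t_def by blast
    have "Re (sumall (E \<rho>)) \<le> t" unfolding t_def by (rule weak_tstar[OF assms(2) E(1)])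
    hence "t = Re (sumall (E \<rho>))" using E(2) by simp
    thus "t \<in> S" unfolding S_def using E(1) by blast
    show "\<forall>a\<in>S. a \<le> t" unfolding S_def t_def using weak_tstar[OF assms(2)] by blast
  qed
  have S3: "{real CARD('n) * Re (phi_plus_exp (E \<rho>)) | E. E \<in> EPC} = S"
    unfolding S_def Re_phi ..
  have min_iff: "is_min {v} w \<longleftrightarrow> w = v" for v w :: real
    unfolding is_min_def by auto
  have S2: "{w. \<exists>E\<in>EPC. is_min {Re (phi_plus_exp (E \<rho>)) / Re (phi_plus_exp (E \<tau>)) | \<tau>. passive_state En \<tau>} w} = S"
    unfolding S_def using ratio_set[where \<rho> = \<rho> and En = En] min_iff by auto
  have P1: "\<forall>E\<in>EPC. \<exists>w. is_min {Re (phi_plus_exp (E \<rho>)) / Re (phi_plus_exp (E \<tau>)) | \<tau>. passive_state En \<tau>} w"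
    using ratio_set[where \<rho> = \<rho> and En = En] min_iff by auto
  show ?thesis unfolding val S2 S3 using P1 maxS R by simp
qed

end
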